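(* Let $A$ be a T-brace and let $a\in\zeta_2(\star,A)$ be an element of infinite order in $(A,+)$. Suppose that the torsion subgroup of the additive group of $\zeta(\star,A)$ is a $p$-group for some prime $p$. Then $a\star a$ has additive order at most $p$ (i.e. $p(a\star a)=0$).
   Context: A (left) brace is a set $A$ with two operations $+$ and $\cdot$ such that $(A,+)$ is an abelian group, $(A,\cdot)$ is a group, and $a(b+c)=ab+ac-a$ for all $a,b,c\in A$. Put $a\star b=ab-a-b$. A subbrace is a subset which is a subgroup of both $(A,+)$ and $(A,\cdot)$; a subbrace $L$ is an ideal if $a\star z, z\star a\in L$ for all $a\in A$, $z\in L$, and then the quotient brace $A/L$ is defined. $A$ is a T-brace if whenever $I$ is an ideal of $J$ and $J$ is an ideal of $A$, then $I$ is an ideal of $A$. The $\star$-center is $\zeta(\star,A)=\{a: a\star x=x\star a=0\ \forall x\}$; $\zeta_2(\star,A)$ is given by $\zeta_2(\star,A)/\zeta(\star,A)=\zeta(\star,A/\zeta(\star,A))$. *)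

theory Defs
  imports "HOL-Algebra.Algebra"
begin

text \<open>A brace is given by a carrier set A together with two binary operations
  pl (the addition +) and ml (the multiplication), both total functions on the
  ambient type but only relevant on A.\<close>

definition addG :: "'a set \<Rightarrow> ('a \<Rightarrow> 'a \<Rightarrow> 'a) \<Rightarrow> 'a monoid" where
  "addG A pl = \<lparr>carrier = A, monoid.mult = pl,
     one = (THE e. e \<in> A \<and> (\<forall>x\<in>A. pl e x = x \<and> pl x e = x))\<rparr>"

definition mulG :: "'a set \<Rightarrow> ('a \<Rightarrow> 'a \<Rightarrow> 'a) \<Rightarrow> 'a monoid" where
  "mulG A ml = \<lparr>carrier = A, monoid.mult = ml,
     one = (THE e. e \<in> A \<and> (\<forall>x\<in>A. ml e x = x \<and> ml x e = x))\<rparr>"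

definition bzero :: "'a set \<Rightarrow> ('a \<Rightarrow> 'a \<Rightarrow> 'a) \<Rightarrow> 'a" where
  "bzero A pl = \<one>\<^bsub>addG A pl\<^esub>"

definition bneg :: "'a set \<Rightarrow> ('a \<Rightarrow> 'a \<Rightarrow> 'a) \<Rightarrow> 'a \<Rightarrow> 'a" where
  "bneg A pl x = inv\<^bsub>addG A pl\<^esub> x"

definition brace :: "'a set \<Rightarrow> ('a \<Rightarrow> 'a \<Rightarrow> 'a) \<Rightarrow> ('a \<Rightarrow> 'a \<Rightarrow> 'a) \<Rightarrow> bool" where
  "brace A pl ml \<longleftrightarrow> comm_group (addG A pl) \<and> group (mulG A ml) \<and>
     (\<forall>a\<in>A. \<forall>b\<in>A. \<forall>c\<in>A. ml a (pl b c) = pl (pl (ml a b) (ml a c)) (bneg A pl a))"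

definition bstar :: "'a set \<Rightarrow> ('a \<Rightarrow> 'a \<Rightarrow> 'a) \<Rightarrow> ('a \<Rightarrow> 'a \<Rightarrow> 'a) \<Rightarrow> 'a \<Rightarrow> 'a \<Rightarrow> 'a" where
  "bstar A pl ml a b = pl (pl (ml a b) (bneg A pl a)) (bneg A pl b)"

definition subbrace :: "'a set \<Rightarrow> ('a \<Rightarrow> 'a \<Rightarrow> 'a) \<Rightarrow> ('a \<Rightarrow> 'a \<Rightarrow> 'a) \<Rightarrow> 'a set \<Rightarrow> bool" where
  "subbrace A pl ml S \<longleftrightarrow> subgroup S (addG A pl) \<and> subgroup S (mulG A ml)"

definition bideal :: "'a set \<Rightarrow> ('a \<Rightarrow> 'a \<Rightarrow> 'a) \<Rightarrow> ('a \<Rightarrow> 'a \<Rightarrow> 'a) \<Rightarrow> 'a set \<Rightarrow> bool" where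
  "bideal A pl ml L \<longleftrightarrow> subbrace A pl ml L \<and>
     (\<forall>a\<in>A. \<forall>z\<in>L. bstar A pl ml a z \<in> L \<and> bstar A pl ml z a \<in> L)"

definition T_brace :: "'a set \<Rightarrow> ('a \<Rightarrow> 'a \<Rightarrow> 'a) \<Rightarrow> ('a \<Rightarrow> 'a \<Rightarrow> 'a) \<Rightarrow> bool" where
  "T_brace A pl ml \<longleftrightarrow> brace A pl ml \<and>
     (\<forall>I J. bideal A pl ml J \<and> bideal J pl ml I \<longrightarrow> bideal A pl ml I)"

definition zeta_star :: "'a set \<Rightarrow> ('a \<Rightarrow> 'a \<Rightarrow> 'a) \<Rightarrow> ('a \<Rightarrow> 'a \<Rightarrow> 'a) \<Rightarrow> 'a set" where
  "zeta_star A pl ml = {a \<in> A. \<forall>x\<in>A. bstar A pl ml a x = bzero A pl \<and> bstar A pl ml x a = bzero A pl}"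

definition qcarrier :: "'a set \<Rightarrow> ('a \<Rightarrow> 'a \<Rightarrow> 'a) \<Rightarrow> 'a set \<Rightarrow> 'a set set" where
  "qcarrier A pl L = {r_coset (addG A pl) L a | a. a \<in> A}"

definition qadd :: "'a set \<Rightarrow> ('a \<Rightarrow> 'a \<Rightarrow> 'a) \<Rightarrow> 'a set \<Rightarrow> 'a set \<Rightarrow> 'a set \<Rightarrow> 'a set" where
  "qadd A pl L U V = r_coset (addG A pl) L (pl (SOME x. x \<in> U) (SOME y. y \<in> V))"

definition qmul :: "'a set \<Rightarrow> ('a \<Rightarrow> 'a \<Rightarrow> 'a) \<Rightarrow> ('a \<Rightarrow> 'a \<Rightarrow> 'a) \<Rightarrow> 'a set \<Rightarrow> 'a set \<Rightarrow> 'a set \<Rightarrow> 'a set" where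
  "qmul A pl ml L U V = r_coset (addG A pl) L (ml (SOME x. x \<in> U) (SOME y. y \<in> V))"

definition zeta2_star :: "'a set \<Rightarrow> ('a \<Rightarrow> 'a \<Rightarrow> 'a) \<Rightarrow> ('a \<Rightarrow> 'a \<Rightarrow> 'a) \<Rightarrow> 'a set" where
  "zeta2_star A pl ml =
     (let Z = zeta_star A pl ml in
      {a \<in> A. r_coset (addG A pl) Z a \<in>
         zeta_star (qcarrier A pl Z) (qadd A pl Z) (qmul A pl ml Z)})"

end

theory Submission
  imports Defs
begin

locale brc =
  fixes A :: "'a set" and pl ml :: "'a \<Rightarrow> 'a \<Rightarrow> 'a"
  assumes br: "brace A pl ml"
begin

abbreviation padd (infixl "\<boxplus>" 65) where "x \<boxplus> y \<equiv> x \<otimes>\<^bsub>addG A pl\<^esub> y"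
abbreviation pmul (infixl "\<boxtimes>" 70) where "x \<boxtimes> y \<equiv> x \<otimes>\<^bsub>mulG A ml\<^esub> y"
abbreviation ng where "ng x \<equiv> inv\<^bsub>addG A pl\<^esub> x"
abbreviation pzero ("\<zero>\<^sub>A") where "\<zero>\<^sub>A \<equiv> \<one>\<^bsub>addG A pl\<^esub>"
abbreviation pst (infixl "\<star>" 70) where "x \<star> y \<equiv> bstar A pl ml x y"

sublocale G: comm_group "addG A pl" using br by (simp add: brace_def)
sublocale M: group "mulG A ml" using br by (simp add: brace_def)

lemma carrG[simp]: "carrier (addG A pl) = A" by (simp add: addG_def)
lemma carrM[simp]: "carrier (mulG A ml) = A" by (simp add: mulG_def)
lemma pl_eq: "pl x y = x \<boxplus> y" by (simp add: addG_def)
lemma ml_eq: "ml x y = x \<boxtimes> y" by (simp add: mulG_def)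
lemma bneg_eq[simp]: "bneg A pl x = ng x" by (simp add: bneg_def)
lemma bzero_eq[simp]: "bzero A pl = \<zero>\<^sub>A" by (simp add: bzero_def)

lemma add_closed[simp]: "x \<in> A \<Longrightarrow> y \<in> A \<Longrightarrow> x \<boxplus> y \<in> A"
  using G.m_closed[of x y] by simp
lemma mul_closed[simp]: "x \<in> A \<Longrightarrow> y \<in> A \<Longrightarrow> x \<boxtimes> y \<in> A"
  using M.m_closed[of x y] by simp
lemma neg_closed[simp]: "x \<in> A \<Longrightarrow> ng x \<in> A"
  using G.inv_closed[of x] by simp
lemma zero_in[simp]: "\<zero>\<^sub>A \<in> A"
  using G.one_closed by simp
lemma one_in[simp]: "\<one>\<^bsub>mulG A ml\<^esub> \<in> A"
  using M.one_closed by simp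

lemma star_def': "x \<star> y = x \<boxtimes> y \<boxplus> ng x \<boxplus> ng y"
  by (simp add: bstar_def pl_eq ml_eq)

lemma dist: "x \<in> A \<Longrightarrow> y \<in> A \<Longrightarrow> z \<in> A \<Longrightarrow> x \<boxtimes> (y \<boxplus> z) = x \<boxtimes> y \<boxplus> x \<boxtimes> z \<boxplus> ng x"
  using br unfolding brace_def by (simp add: pl_eq ml_eq)

lemma star_closed[simp]: "x \<in> A \<Longrightarrow> y \<in> A \<Longrightarrow> x \<star> y \<in> A"
  by (simp add: star_def')

lemma E1: "x \<in> A \<Longrightarrow> y \<in> A \<Longrightarrow> x \<boxtimes> y = x \<boxplus> y \<boxplus> x \<star> y"
  unfolding star_def'
  by (smt (verit) G.inv_closed G.m_assoc G.m_closed G.m_comm G.r_inv G.r_one carrG M.m_closed carrM)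

lemma zero_one: "\<one>\<^bsub>mulG A ml\<^esub> = \<zero>\<^sub>A"
proof -
  let ?e = "\<one>\<^bsub>mulG A ml\<^esub>"
  have "?e \<boxtimes> (\<zero>\<^sub>A \<boxplus> \<zero>\<^sub>A) = ?e \<boxtimes> \<zero>\<^sub>A \<boxplus> ?e \<boxtimes> \<zero>\<^sub>A \<boxplus> ng ?e"
    by (rule dist) simp_all
  moreover have "?e \<boxtimes> \<zero>\<^sub>A = \<zero>\<^sub>A" using M.l_one[of "\<zero>\<^sub>A"] by simp
  moreover have "\<zero>\<^sub>A \<boxplus> \<zero>\<^sub>A = \<zero>\<^sub>A" using G.l_one[of "\<zero>\<^sub>A"] by simp
  ultimately have "\<zero>\<^sub>A = ng ?e" using G.l_one[of "ng ?e"] by simp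
  then have "ng \<zero>\<^sub>A = ?e" using G.inv_inv[of ?e] by simp
  then show ?thesis using G.inv_one by simp
qed

lemma star_left_add: "x \<in> A \<Longrightarrow> y \<in> A \<Longrightarrow> z \<in> A \<Longrightarrow> x \<star> (y \<boxplus> z) = x \<star> y \<boxplus> x \<star> z"
  unfolding star_def' using dist
  by (smt (verit) G.inv_closed G.inv_mult G.m_assoc G.m_closed G.m_comm carrG M.m_closed carrM)


lemma E3:
  assumes x: "x \<in> A" and y: "y \<in> A" and c: "c \<in> A"
  shows "(x \<boxtimes> y) \<star> c = x \<star> (y \<star> c) \<boxplus> x \<star> c \<boxplus> y \<star> c"
proof -
  have "(x \<boxtimes> y) \<boxtimes> c = x \<boxtimes> (y \<boxtimes> c)" using M.m_assoc[of x y c] x y c by simp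
  also have "y \<boxtimes> c = y \<boxplus> (c \<boxplus> y \<star> c)" using E1[OF y c] G.m_assoc[of y c "y \<star> c"] y c by simp
  also have "x \<boxtimes> (y \<boxplus> (c \<boxplus> y \<star> c)) = x \<boxtimes> y \<boxplus> x \<boxtimes> (c \<boxplus> y \<star> c) \<boxplus> ng x"
    using dist x y c by simp
  also have "x \<boxtimes> (c \<boxplus> y \<star> c) = x \<boxtimes> c \<boxplus> x \<boxtimes> (y \<star> c) \<boxplus> ng x"
    using dist x y c by simp
  also have "x \<boxtimes> c = x \<boxplus> c \<boxplus> x \<star> c" using E1 x c by simp
  also have "x \<boxtimes> (y \<star> c) = x \<boxplus> y \<star> c \<boxplus> x \<star> (y \<star> c)" using E1 x y c by simp
  finally have h: "(x \<boxtimes> y) \<boxtimes> c = x \<boxtimes> y \<boxplus> (x \<boxplus> c \<boxplus> x \<star> c \<boxplus> (x \<boxplus> y \<star> c \<boxplus> x \<star> (y \<star> c)) \<boxplus> ng x) \<boxplus> ng x" .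
  define u where "u = x \<boxtimes> y"
  have u: "u \<in> A" using x y u_def by simp
  define s1 where "s1 = x \<star> c"
  define s2 where "s2 = y \<star> c"
  define s3 where "s3 = x \<star> (y \<star> c)"
  have s: "s1 \<in> A" "s2 \<in> A" "s3 \<in> A" using x y c s1_def s2_def s3_def by auto
  have "(x \<boxtimes> y) \<star> c = (x \<boxtimes> y) \<boxtimes> c \<boxplus> ng u \<boxplus> ng c" unfolding star_def' u_def ..
  also have "\<dots> = u \<boxplus> (x \<boxplus> c \<boxplus> s1 \<boxplus> (x \<boxplus> s2 \<boxplus> s3) \<boxplus> ng x) \<boxplus> ng x \<boxplus> ng u \<boxplus> ng c"
    unfolding h u_def s1_def s2_def s3_def ..
  also have "\<dots> = s3 \<boxplus> s1 \<boxplus> s2"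
    using u s x c
    by (smt (verit) G.inv_closed G.m_assoc G.m_closed G.m_comm G.r_inv G.r_one carrG)
  finally show ?thesis unfolding s1_def s2_def s3_def .
qed


lemma star_hom: "x \<in> A \<Longrightarrow> (\<lambda>y. x \<star> y) \<in> hom (addG A pl) (addG A pl)"
  by (rule homI) (simp_all add: star_left_add)

lemma star_right_zero[simp]: "x \<in> A \<Longrightarrow> x \<star> \<zero>\<^sub>A = \<zero>\<^sub>A"
  using group_hom.hom_one[of "addG A pl" "addG A pl" "\<lambda>y. x \<star> y"] star_hom
  by (simp add: group_hom_def group_hom_axioms_def G.is_group)

lemma star_right_neg: "x \<in> A \<Longrightarrow> y \<in> A \<Longrightarrow> x \<star> (ng y) = ng (x \<star> y)"
  using group_hom.hom_inv[of "addG A pl" "addG A pl" "\<lambda>y. x \<star> y"] star_hom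
  by (simp add: group_hom_def group_hom_axioms_def G.is_group)

lemma star_right_pow: "x \<in> A \<Longrightarrow> y \<in> A \<Longrightarrow> x \<star> (y [^]\<^bsub>addG A pl\<^esub> (k::int)) = (x \<star> y) [^]\<^bsub>addG A pl\<^esub> k"
  using hom_int_pow[OF star_hom] G.is_group by simp

lemma star_zero_left[simp]: "x \<in> A \<Longrightarrow> \<zero>\<^sub>A \<star> x = \<zero>\<^sub>A"
proof -
  assume x: "x \<in> A"
  have "\<zero>\<^sub>A \<boxtimes> x = x" using M.l_one[of x] zero_one x by simp
  then have "\<zero>\<^sub>A \<star> x = x \<boxplus> ng \<zero>\<^sub>A \<boxplus> ng x" unfolding star_def' by simp
  also have "\<dots> = \<zero>\<^sub>A" using x by (metis G.inv_one G.r_one G.r_inv carrG)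
  finally show ?thesis .
qed

abbreviation "Zs \<equiv> zeta_star A pl ml"

lemma Z_iff: "z \<in> Zs \<longleftrightarrow> z \<in> A \<and> (\<forall>x\<in>A. z \<star> x = \<zero>\<^sub>A \<and> x \<star> z = \<zero>\<^sub>A)"
  by (simp add: zeta_star_def)

lemma Z_sub: "Zs \<subseteq> A" using Z_iff by blast

lemma Z_l: "z \<in> Zs \<Longrightarrow> x \<in> A \<Longrightarrow> z \<star> x = \<zero>\<^sub>A" using Z_iff by blast
lemma Z_r: "z \<in> Zs \<Longrightarrow> x \<in> A \<Longrightarrow> x \<star> z = \<zero>\<^sub>A" using Z_iff by blast

lemma Z_mul_l: "z \<in> Zs \<Longrightarrow> x \<in> A \<Longrightarrow> z \<boxtimes> x = z \<boxplus> x"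
  using E1[of z x] Z_l[of z x] Z_sub G.r_one[of "z \<boxplus> x"] by auto
lemma Z_mul_r: "z \<in> Zs \<Longrightarrow> x \<in> A \<Longrightarrow> x \<boxtimes> z = x \<boxplus> z"
  using E1[of x z] Z_r[of z x] Z_sub G.r_one[of "x \<boxplus> z"] by auto

lemma Z_subgroup: "subgroup Zs (addG A pl)"
proof (rule G.subgroupI)
  show "Zs \<subseteq> carrier (addG A pl)" using Z_sub by simp
  have "\<zero>\<^sub>A \<in> Zs" by (simp add: Z_iff)
  then show "Zs \<noteq> {}" by blast
next
  fix z assume z: "z \<in> Zs"
  then have zA: "z \<in> A" using Z_sub by blast
  have "ng z \<star> x = \<zero>\<^sub>A" if x: "x \<in> A" for x
  proof -
    have "z \<boxtimes> ng z = \<zero>\<^sub>A" using Z_mul_l[OF z] zA G.r_inv[of z] by simp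
    then have "\<zero>\<^sub>A = (z \<boxtimes> ng z) \<star> x" using x by simp
    also have "\<dots> = z \<star> (ng z \<star> x) \<boxplus> z \<star> x \<boxplus> ng z \<star> x" using E3 zA x by simp
    also have "\<dots> = ng z \<star> x" using Z_l[OF z] zA x G.l_one by simp
    finally show ?thesis by simp
  qed
  moreover have "x \<star> ng z = \<zero>\<^sub>A" if x: "x \<in> A" for x
    using star_right_neg[OF x zA] Z_r[OF z x] by simp
  ultimately show "inv\<^bsub>addG A pl\<^esub> z \<in> Zs" using zA by (simp add: Z_iff)
next
  fix z w assume z: "z \<in> Zs" and w: "w \<in> Zs"
  then have zA: "z \<in> A" and wA: "w \<in> A" using Z_sub by auto
  have "(z \<boxplus> w) \<star> x = \<zero>\<^sub>A" if x: "x \<in> A" for x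
  proof -
    have "(z \<boxplus> w) \<star> x = (z \<boxtimes> w) \<star> x" using Z_mul_l[OF z wA] by simp
    also have "\<dots> = z \<star> (w \<star> x) \<boxplus> z \<star> x \<boxplus> w \<star> x" using E3 zA wA x by simp
    also have "\<dots> = \<zero>\<^sub>A" using Z_l[OF z] Z_l[OF w] zA wA x by simp
    finally show ?thesis .
  qed
  moreover have "x \<star> (z \<boxplus> w) = \<zero>\<^sub>A" if x: "x \<in> A" for x
    using star_left_add[OF x zA wA] Z_r[OF z x] Z_r[OF w x] by simp
  ultimately show "z \<otimes>\<^bsub>addG A pl\<^esub> w \<in> Zs" using zA wA by (simp add: Z_iff)
qed


definition "Qs = {c \<in> A. \<forall>x\<in>A. c \<star> x \<in> Zs \<and> x \<star> c \<in> Zs}"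

lemma Q_sub: "Qs \<subseteq> A" unfolding Qs_def by blast
lemma Z_Q: "Zs \<subseteq> Qs" unfolding Qs_def using Z_sub Z_l Z_r Z_subgroup subgroup.one_closed[OF Z_subgroup]
  by auto

lemma key:
  assumes c: "c \<in> Qs" and d: "d \<in> A" and x: "x \<in> A"
  shows "(c \<boxplus> d) \<star> x = c \<star> (d \<star> x) \<boxplus> c \<star> x \<boxplus> d \<star> x"
proof -
  have cA: "c \<in> A" using c Q_sub by blast
  have cdZ: "c \<star> d \<in> Zs" using c d unfolding Qs_def by blast
  define w where "w = ng (c \<star> d)"
  have wZ: "w \<in> Zs" unfolding w_def using subgroup.m_inv_closed[OF Z_subgroup cdZ] .
  have wA: "w \<in> A" using wZ Z_sub by blast
  define e where "e = d \<boxplus> w"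
  have eA: "e \<in> A" using e_def d wA by simp
  have "c \<star> e = c \<star> d \<boxplus> c \<star> w" unfolding e_def using star_left_add cA d wA by simp
  also have "c \<star> w = \<zero>\<^sub>A" using Z_r[OF wZ cA] .
  finally have ce: "c \<star> e = c \<star> d" using cA d G.r_one[of "c \<star> d"] by simp
  have "c \<boxtimes> e = c \<boxplus> e \<boxplus> c \<star> e" using E1 cA eA by simp
  also have "\<dots> = c \<boxplus> d" unfolding ce unfolding e_def w_def using cA d
    by (simp add: G.m_assoc G.l_inv)
  finally have ce2: "c \<boxplus> d = c \<boxtimes> e" by simp
  have "e = d \<boxtimes> w" unfolding e_def using Z_mul_r[OF wZ d] by simp
  then have "e \<star> x = d \<star> (w \<star> x) \<boxplus> d \<star> x \<boxplus> w \<star> x" using E3 d wA x by simp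
  also have "\<dots> = d \<star> x" using Z_l[OF wZ x] d x G.l_one G.r_one by simp
  finally have ex: "e \<star> x = d \<star> x" .
  have "(c \<boxplus> d) \<star> x = c \<star> (e \<star> x) \<boxplus> c \<star> x \<boxplus> e \<star> x" unfolding ce2 using E3 cA eA x by simp
  then show ?thesis unfolding ex .
qed

lemma key2:
  assumes c: "c \<in> Qs" and d: "d \<in> Qs" and x: "x \<in> A"
  shows "(c \<boxplus> d) \<star> x = c \<star> x \<boxplus> d \<star> x"
proof -
  have cA: "c \<in> A" and dA: "d \<in> A" using c d Q_sub by auto
  have "d \<star> x \<in> Zs" using d x unfolding Qs_def by blast
  then have "c \<star> (d \<star> x) = \<zero>\<^sub>A" using Z_r cA by blast
  then show ?thesis using key[OF c dA x] cA dA x G.l_one by simp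
qed

lemma Q_neg: assumes c: "c \<in> Qs" shows "ng c \<in> Qs"
proof -
  have cA: "c \<in> A" using c Q_sub by blast
  have "ng c \<star> x \<in> Zs" if x: "x \<in> A" for x
  proof -
    define w where "w = ng c \<star> x"
    have wA: "w \<in> A" using w_def cA x by simp
    have cxZ: "c \<star> x \<in> Zs" using c x unfolding Qs_def by blast
    have "\<zero>\<^sub>A = (c \<boxplus> ng c) \<star> x" using cA x G.r_inv[of c] by simp
    also have "\<dots> = c \<star> w \<boxplus> c \<star> x \<boxplus> w" unfolding w_def by (rule key[OF c neg_closed[OF cA] x])
    finally have h: "\<zero>\<^sub>A = c \<star> w \<boxplus> c \<star> x \<boxplus> w" .
    define z where "z = ng (c \<star> x)"
    have zZ: "z \<in> Zs" unfolding z_def using subgroup.m_inv_closed[OF Z_subgroup cxZ] .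
    have zA: "z \<in> A" using zZ Z_sub by blast
    have cw: "c \<star> w \<boxplus> w = z" unfolding z_def using h cA x wA
      by (smt (verit) G.inv_closed G.m_assoc G.m_closed G.m_comm G.r_inv G.r_one carrG star_closed G.inv_inv G.inv_mult G.l_one)
    have "c \<boxtimes> w = c \<boxplus> w \<boxplus> c \<star> w" using E1 cA wA by simp
    also have "\<dots> = c \<boxplus> z" unfolding cw[symmetric] using cA wA
      by (smt (verit) G.m_assoc G.m_closed G.m_comm carrG star_closed)
    also have "\<dots> = c \<boxtimes> z" using Z_mul_r[OF zZ cA] by simp
    finally have "w = z" using M.l_cancel[of c w z] cA wA zA by simp
    then show ?thesis using zZ w_def by simp
  qed
  moreover have "x \<star> ng c \<in> Zs" if x: "x \<in> A" for x
  proof -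
    have "x \<star> c \<in> Zs" using c x unfolding Qs_def by blast
    then show ?thesis using star_right_neg[OF x cA] subgroup.m_inv_closed[OF Z_subgroup] by simp
  qed
  ultimately show ?thesis unfolding Qs_def using cA by simp
qed

lemma Q_subgroup: "subgroup Qs (addG A pl)"
proof (rule G.subgroupI)
  show "Qs \<subseteq> carrier (addG A pl)" using Q_sub by simp
  show "Qs \<noteq> {}" using Z_Q subgroup.one_closed[OF Z_subgroup] by blast
  show "\<And>c. c \<in> Qs \<Longrightarrow> inv\<^bsub>addG A pl\<^esub> c \<in> Qs" using Q_neg by simp
next
  fix c d assume c: "c \<in> Qs" and d: "d \<in> Qs"
  have cA: "c \<in> A" and dA: "d \<in> A" using c d Q_sub by auto
  have "(c \<boxplus> d) \<star> x \<in> Zs \<and> x \<star> (c \<boxplus> d) \<in> Zs" if x: "x \<in> A" for x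
    using key2[OF c d x] star_left_add[OF x cA dA] c d x subgroup.m_closed[OF Z_subgroup]
    unfolding Qs_def by auto
  then show "c \<otimes>\<^bsub>addG A pl\<^esub> d \<in> Qs" unfolding Qs_def using cA dA by simp
qed

lemma Q_hom: "x \<in> A \<Longrightarrow> (\<lambda>c. c \<star> x) \<in> hom ((addG A pl)\<lparr>carrier := Qs\<rparr>) (addG A pl)"
  by (rule homI) (auto simp: key2 dest: subsetD[OF Q_sub])

lemma star_left_pow:
  assumes c: "c \<in> Qs" and x: "x \<in> A"
  shows "(c [^]\<^bsub>addG A pl\<^esub> (k::int)) \<star> x = (c \<star> x) [^]\<^bsub>addG A pl\<^esub> k"
proof -
  have "(c [^]\<^bsub>addG A pl\<lparr>carrier := Qs\<rparr>\<^esub> k) \<star> x = (c \<star> x) [^]\<^bsub>addG A pl\<^esub> k"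
    using hom_int_pow[OF Q_hom[OF x], of c k] G.subgroup_imp_group[OF Q_subgroup] G.is_group c by simp
  then show ?thesis using G.int_pow_consistent[OF Q_subgroup c] by simp
qed


lemma M_subgroup_gen:
  assumes I: "subgroup I (addG A pl)" and IJ: "I \<subseteq> J" and J: "subgroup J (mulG A ml)"
    and st: "\<And>x i. x \<in> J \<Longrightarrow> i \<in> I \<Longrightarrow> i \<star> x \<in> I"
  shows "subgroup I (mulG A ml)"
proof (rule M.subgroupI)
  have IA: "I \<subseteq> A" using subgroup.subset[OF I] by simp
  then show "I \<subseteq> carrier (mulG A ml)" by simp
  show "I \<noteq> {}" using subgroup.one_closed[OF I] by blast
next
  fix u assume u: "u \<in> I"
  have uA: "u \<in> A" using u subgroup.subset[OF I] by auto
  define u' where "u' = inv\<^bsub>mulG A ml\<^esub> u"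
  have u'J: "u' \<in> J" unfolding u'_def using subgroup.m_inv_closed[OF J] u IJ by blast
  have u'A: "u' \<in> A" using uA u'_def M.inv_closed by simp
  have sI: "u \<star> u' \<in> I" using st[OF u'J u] .
  have "u \<boxplus> u' \<boxplus> u \<star> u' = \<zero>\<^sub>A" using E1[OF uA u'A] M.r_inv[of u] uA zero_one u'_def by simp
  then have "u' = ng u \<boxplus> ng (u \<star> u')" using uA u'A
    by (smt (verit) G.inv_closed G.m_assoc G.m_closed G.m_comm G.r_inv G.r_one carrG star_closed G.l_inv G.l_one)
  moreover have "ng u \<boxplus> ng (u \<star> u') \<in> I"
    using subgroup.m_closed[OF I] subgroup.m_inv_closed[OF I] u sI by simp
  ultimately show "inv\<^bsub>mulG A ml\<^esub> u \<in> I" using u'_def by simp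
next
  fix u v assume u: "u \<in> I" and v: "v \<in> I"
  have uA: "u \<in> A" and vA: "v \<in> A" using u v subgroup.subset[OF I] by auto
  have "u \<boxtimes> v = u \<boxplus> v \<boxplus> u \<star> v" using E1[OF uA vA] .
  moreover have "u \<boxplus> v \<boxplus> u \<star> v \<in> I"
    using subgroup.m_closed[OF I] u v st[OF subsetD[OF IJ v] u] by simp
  ultimately show "u \<otimes>\<^bsub>mulG A ml\<^esub> v \<in> I" by simp
qed

lemma ideal_of_A:
  assumes S: "subgroup S (addG A pl)" and ZS: "Zs \<subseteq> S" and SQ: "S \<subseteq> Qs"
  shows "bideal A pl ml S"
proof -
  have st1: "i \<star> x \<in> S" "x \<star> i \<in> S" if "x \<in> A" "i \<in> S" for x i
    using that SQ ZS unfolding Qs_def by auto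
  have "subgroup S (mulG A ml)"
    using M_subgroup_gen[OF S _ M.subgroup_self] st1 subgroup.subset[OF S] by simp
  then show ?thesis unfolding bideal_def subbrace_def using S st1 by simp
qed

lemma addG_sub:
  assumes S: "subgroup S (addG A pl)"
  shows "addG S pl = (addG A pl)\<lparr>carrier := S\<rparr>"
proof -
  have SA: "S \<subseteq> A" using subgroup.subset[OF S] by simp
  have o: "\<zero>\<^sub>A \<in> S" using subgroup.one_closed[OF S] .
  have "(THE e. e \<in> S \<and> (\<forall>x\<in>S. pl e x = x \<and> pl x e = x)) = \<zero>\<^sub>A"
  proof (rule the_equality)
    show "\<zero>\<^sub>A \<in> S \<and> (\<forall>x\<in>S. pl \<zero>\<^sub>A x = x \<and> pl x \<zero>\<^sub>A = x)"
      using o SA by (auto simp: pl_eq)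
  next
    fix e assume "e \<in> S \<and> (\<forall>x\<in>S. pl e x = x \<and> pl x e = x)"
    then have "e \<boxplus> \<zero>\<^sub>A = \<zero>\<^sub>A" "e \<in> A" using o SA by (auto simp: pl_eq)
    then show "e = \<zero>\<^sub>A" by simp
  qed
  moreover have "\<zero>\<^sub>A = (THE e. e \<in> A \<and> (\<forall>x\<in>A. pl e x = x \<and> pl x e = x))"
    by (simp add: addG_def)
  ultimately show ?thesis by (simp add: addG_def)
qed

lemma mulG_sub:
  assumes S: "subgroup S (mulG A ml)"
  shows "mulG S ml = (mulG A ml)\<lparr>carrier := S\<rparr>"
proof -
  let ?e = "\<one>\<^bsub>mulG A ml\<^esub>"
  have SA: "S \<subseteq> A" using subgroup.subset[OF S] by simp
  have o: "?e \<in> S" using subgroup.one_closed[OF S] .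
  have "(THE e. e \<in> S \<and> (\<forall>x\<in>S. ml e x = x \<and> ml x e = x)) = ?e"
  proof (rule the_equality)
    show "?e \<in> S \<and> (\<forall>x\<in>S. ml ?e x = x \<and> ml x ?e = x)"
      using o SA by (auto simp: ml_eq)
  next
    fix e assume "e \<in> S \<and> (\<forall>x\<in>S. ml e x = x \<and> ml x e = x)"
    then have "e \<boxtimes> ?e = ?e" "e \<in> A" using o SA by (auto simp: ml_eq)
    then show "e = ?e" by simp
  qed
  moreover have "?e = (THE e. e \<in> A \<and> (\<forall>x\<in>A. ml e x = x \<and> ml x e = x))"
    by (simp add: mulG_def)
  ultimately show ?thesis by (simp add: mulG_def)
qed

lemma bstar_sub:
  assumes S: "subgroup S (addG A pl)" and x: "x \<in> S" and y: "y \<in> S"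
  shows "bstar S pl ml x y = x \<star> y"
proof -
  have "bneg S pl u = ng u" if "u \<in> S" for u
    unfolding bneg_def addG_sub[OF S] using G.m_inv_consistent[OF S that] .
  then show ?thesis unfolding bstar_def using x y by simp
qed

lemma ideal_of_J:
  assumes JG: "subgroup J (addG A pl)" and JM: "subgroup J (mulG A ml)"
    and IG: "subgroup I (addG A pl)" and IJ: "I \<subseteq> J"
    and st: "\<And>x i. x \<in> J \<Longrightarrow> i \<in> I \<Longrightarrow> x \<star> i \<in> I \<and> i \<star> x \<in> I"
  shows "bideal J pl ml I"
proof -
  have IM: "subgroup I (mulG A ml)" using M_subgroup_gen[OF IG IJ JM] st by blast
  have "subgroup I (addG J pl)" unfolding addG_sub[OF JG] using G.subgroup_incl[OF IG JG IJ] .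
  moreover have "subgroup I (mulG J ml)" unfolding mulG_sub[OF JM] using M.subgroup_incl[OF IM JM IJ] .
  moreover have "\<forall>a\<in>J. \<forall>z\<in>I. bstar J pl ml a z \<in> I \<and> bstar J pl ml z a \<in> I"
    using bstar_sub[OF JG] st IJ by auto
  ultimately show ?thesis unfolding bideal_def subbrace_def by simp
qed


abbreviation "Qc \<equiv> qcarrier A pl Zs"
abbreviation "qa \<equiv> qadd A pl Zs"
abbreviation "qm \<equiv> qmul A pl ml Zs"

lemma coset_mem: "y \<in> Zs #>\<^bsub>addG A pl\<^esub> u \<longleftrightarrow> (\<exists>z\<in>Zs. y = z \<boxplus> u)"
  by (auto simp: r_coset_def)

lemma coset_repr: "u \<in> A \<Longrightarrow> y \<in> Zs #>\<^bsub>addG A pl\<^esub> u \<Longrightarrow> Zs #>\<^bsub>addG A pl\<^esub> y = Zs #>\<^bsub>addG A pl\<^esub> u"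
  using G.repr_independence[of y Zs u] Z_subgroup by simp

lemma some_in: "u \<in> A \<Longrightarrow> (SOME x. x \<in> Zs #>\<^bsub>addG A pl\<^esub> u) \<in> Zs #>\<^bsub>addG A pl\<^esub> u"
proof -
  assume u: "u \<in> A"
  have "u \<in> Zs #>\<^bsub>addG A pl\<^esub> u" using G.rcos_self[of u Zs] Z_subgroup u by simp
  then show ?thesis by (rule someI)
qed

lemma coset_self_Z: "u \<in> A \<Longrightarrow> Zs #>\<^bsub>addG A pl\<^esub> u = Zs \<Longrightarrow> u \<in> Zs"
  using G.rcos_self[of u Zs] Z_subgroup by simp

lemma coset_zero: "Zs #>\<^bsub>addG A pl\<^esub> \<zero>\<^sub>A = Zs"
  using G.coset_join2[of "\<zero>\<^sub>A" Zs] Z_subgroup subgroup.one_closed[OF Z_subgroup] by simp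

lemma qadd_eq:
  assumes u: "u \<in> A" and v: "v \<in> A"
  shows "qa (Zs #>\<^bsub>addG A pl\<^esub> u) (Zs #>\<^bsub>addG A pl\<^esub> v) = Zs #>\<^bsub>addG A pl\<^esub> (u \<boxplus> v)"
proof -
  define x where "x = (SOME x. x \<in> Zs #>\<^bsub>addG A pl\<^esub> u)"
  define y where "y = (SOME x. x \<in> Zs #>\<^bsub>addG A pl\<^esub> v)"
  have "x \<in> Zs #>\<^bsub>addG A pl\<^esub> u" unfolding x_def by (rule some_in[OF u])
  then obtain z1 where z1: "z1 \<in> Zs" "x = z1 \<boxplus> u" unfolding coset_mem by (rule bexE)
  have "y \<in> Zs #>\<^bsub>addG A pl\<^esub> v" unfolding y_def by (rule some_in[OF v])
  then obtain z2 where z2: "z2 \<in> Zs" "y = z2 \<boxplus> v" unfolding coset_mem by (rule bexE)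
  have zA: "z1 \<in> A" "z2 \<in> A" using z1 z2 Z_sub by auto
  have "x \<boxplus> y = (z1 \<boxplus> z2) \<boxplus> (u \<boxplus> v)" unfolding z1(2) z2(2) using zA u v
    using G.m_assoc[of z1 u "z2 \<boxplus> v"] G.m_lcomm[of u z2 v] G.m_assoc[of z1 z2 "u \<boxplus> v"] by simp
  moreover have "z1 \<boxplus> z2 \<in> Zs" using subgroup.m_closed[OF Z_subgroup] z1 z2 by simp
  ultimately have "x \<boxplus> y \<in> Zs #>\<^bsub>addG A pl\<^esub> (u \<boxplus> v)"
    using G.rcosI[of "z1 \<boxplus> z2" Zs "u \<boxplus> v"] Z_sub u v by simp
  then have "Zs #>\<^bsub>addG A pl\<^esub> (x \<boxplus> y) = Zs #>\<^bsub>addG A pl\<^esub> (u \<boxplus> v)" by (rule coset_repr[OF add_closed[OF u v]])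
  moreover have "qa (Zs #>\<^bsub>addG A pl\<^esub> u) (Zs #>\<^bsub>addG A pl\<^esub> v) = Zs #>\<^bsub>addG A pl\<^esub> (pl x y)"
    unfolding qadd_def x_def y_def ..
  ultimately show ?thesis using pl_eq[of x y] by simp
qed

lemma qmul_eq:
  assumes u: "u \<in> A" and v: "v \<in> A"
  shows "qm (Zs #>\<^bsub>addG A pl\<^esub> u) (Zs #>\<^bsub>addG A pl\<^esub> v) = Zs #>\<^bsub>addG A pl\<^esub> (u \<boxtimes> v)"
proof -
  define x where "x = (SOME x. x \<in> Zs #>\<^bsub>addG A pl\<^esub> u)"
  define y where "y = (SOME x. x \<in> Zs #>\<^bsub>addG A pl\<^esub> v)"
  have "x \<in> Zs #>\<^bsub>addG A pl\<^esub> u" unfolding x_def by (rule some_in[OF u])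
  then obtain z1 where z1: "z1 \<in> Zs" "x = z1 \<boxplus> u" unfolding coset_mem by (rule bexE)
  have "y \<in> Zs #>\<^bsub>addG A pl\<^esub> v" unfolding y_def by (rule some_in[OF v])
  then obtain z2 where z2: "z2 \<in> Zs" "y = z2 \<boxplus> v" unfolding coset_mem by (rule bexE)
  have zA: "z1 \<in> A" "z2 \<in> A" using z1 z2 Z_sub by auto
  have e1: "z1 \<boxtimes> u = x" using z1 Z_mul_l[OF z1(1) u] by simp
  have e2: "z2 \<boxtimes> v = y" using z2 Z_mul_l[OF z2(1) v] by simp
  have e3: "u \<boxtimes> z2 = z2 \<boxtimes> u" using Z_mul_l[OF z2(1) u] Z_mul_r[OF z2(1) u] G.m_comm[of u z2] u zA by simp
  have e4: "z1 \<boxtimes> z2 = z1 \<boxplus> z2" using Z_mul_l[OF z1(1) zA(2)] .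
  have z12: "z1 \<boxplus> z2 \<in> Zs" using subgroup.m_closed[OF Z_subgroup] z1 z2 by simp
  have uvA: "u \<boxtimes> v \<in> A" using u v by simp
  have e5: "(z1 \<boxplus> z2) \<boxtimes> (u \<boxtimes> v) = (z1 \<boxplus> z2) \<boxplus> (u \<boxtimes> v)" using Z_mul_l[OF z12 uvA] .
  have "x \<boxtimes> y = (z1 \<boxtimes> u) \<boxtimes> (z2 \<boxtimes> v)" unfolding e1 e2 ..
  also have "\<dots> = z1 \<boxtimes> ((u \<boxtimes> z2) \<boxtimes> v)"
    using zA u v M.m_assoc[of z1 u "z2 \<boxtimes> v"] M.m_assoc[of u z2 v] by simp
  also have "\<dots> = z1 \<boxtimes> ((z2 \<boxtimes> u) \<boxtimes> v)" unfolding e3 ..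
  also have "\<dots> = (z1 \<boxtimes> z2) \<boxtimes> (u \<boxtimes> v)"
    using zA u v M.m_assoc[of z1 z2 "u \<boxtimes> v"] M.m_assoc[of z2 u v] by simp
  also have "\<dots> = (z1 \<boxplus> z2) \<boxplus> (u \<boxtimes> v)" unfolding e4 e5 ..
  finally have "x \<boxtimes> y = (z1 \<boxplus> z2) \<boxplus> (u \<boxtimes> v)" .
  moreover have "z1 \<boxplus> z2 \<in> Zs" using subgroup.m_closed[OF Z_subgroup] z1 z2 by simp
  ultimately have "x \<boxtimes> y \<in> Zs #>\<^bsub>addG A pl\<^esub> (u \<boxtimes> v)"
    using G.rcosI[of "z1 \<boxplus> z2" Zs "u \<boxtimes> v"] Z_sub u v by simp
  then have "Zs #>\<^bsub>addG A pl\<^esub> (x \<boxtimes> y) = Zs #>\<^bsub>addG A pl\<^esub> (u \<boxtimes> v)" by (rule coset_repr[OF mul_closed[OF u v]])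
  moreover have "qm (Zs #>\<^bsub>addG A pl\<^esub> u) (Zs #>\<^bsub>addG A pl\<^esub> v) = Zs #>\<^bsub>addG A pl\<^esub> (ml x y)"
    unfolding qmul_def x_def y_def ..
  ultimately show ?thesis using ml_eq[of x y] by simp
qed

lemma Qc_I: "u \<in> A \<Longrightarrow> Zs #>\<^bsub>addG A pl\<^esub> u \<in> Qc"
  unfolding qcarrier_def by (rule CollectI, rule exI[of _ u], simp)

lemma Qc_E: "W \<in> Qc \<Longrightarrow> \<exists>u\<in>A. W = Zs #>\<^bsub>addG A pl\<^esub> u"
  unfolding qcarrier_def by auto

lemma Z_Qc: "Zs \<in> Qc" using Qc_I[OF zero_in] coset_zero by simp

lemma qone: "\<one>\<^bsub>addG Qc qa\<^esub> = Zs"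
proof -
  have "(THE e. e \<in> Qc \<and> (\<forall>W\<in>Qc. qa e W = W \<and> qa W e = W)) = Zs"
  proof (rule the_equality)
    have "qa Zs W = W \<and> qa W Zs = W" if W: "W \<in> Qc" for W
    proof -
      obtain u where u: "u \<in> A" "W = Zs #>\<^bsub>addG A pl\<^esub> u" using Qc_E[OF W] by (rule bexE)
      have "qa Zs W = W" using qadd_eq[OF zero_in u(1)] coset_zero u G.l_one[of u] by simp
      moreover have "qa W Zs = W" using qadd_eq[OF u(1) zero_in] coset_zero u G.r_one[of u] by simp
      ultimately show ?thesis by simp
    qed
    then show "Zs \<in> Qc \<and> (\<forall>W\<in>Qc. qa Zs W = W \<and> qa W Zs = W)" using Z_Qc by simp
  next
    fix e assume e: "e \<in> Qc \<and> (\<forall>W\<in>Qc. qa e W = W \<and> qa W e = W)"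
    then have eQ: "e \<in> Qc" by simp
    obtain w where w: "w \<in> A" "e = Zs #>\<^bsub>addG A pl\<^esub> w" using Qc_E[OF eQ] by (rule bexE)
    have "qa e Zs = Zs" using e Z_Qc by simp
    moreover have "qa e Zs = e" using w qadd_eq[OF w(1) zero_in] coset_zero G.r_one[of w] by simp
    ultimately show "e = Zs" by simp
  qed
  then show ?thesis by (simp add: addG_def)
qed


lemma qcarr: "carrier (addG Qc qa) = Qc" by (simp add: addG_def)
lemma qmult: "W \<otimes>\<^bsub>addG Qc qa\<^esub> V = qa W V" by (simp add: addG_def)

lemma qneg:
  assumes u: "u \<in> A"
  shows "inv\<^bsub>addG Qc qa\<^esub> (Zs #>\<^bsub>addG A pl\<^esub> u) = Zs #>\<^bsub>addG A pl\<^esub> (ng u)"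
proof -
  let ?U = "Zs #>\<^bsub>addG A pl\<^esub> u"
  have nu: "ng u \<in> A" using u by simp
  have "(THE y. y \<in> Qc \<and> qa ?U y = Zs \<and> qa y ?U = Zs) = Zs #>\<^bsub>addG A pl\<^esub> (ng u)"
  proof (rule the_equality)
    have "qa ?U (Zs #>\<^bsub>addG A pl\<^esub> ng u) = Zs" using qadd_eq[OF u nu] G.r_inv[of u] u coset_zero by simp
    moreover have "qa (Zs #>\<^bsub>addG A pl\<^esub> ng u) ?U = Zs" using qadd_eq[OF nu u] G.l_inv[of u] u coset_zero by simp
    ultimately show "Zs #>\<^bsub>addG A pl\<^esub> ng u \<in> Qc \<and> qa ?U (Zs #>\<^bsub>addG A pl\<^esub> ng u) = Zs \<and> qa (Zs #>\<^bsub>addG A pl\<^esub> ng u) ?U = Zs"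
      using Qc_I[OF nu] by simp
  next
    fix Y assume Y: "Y \<in> Qc \<and> qa ?U Y = Zs \<and> qa Y ?U = Zs"
    then have YQ: "Y \<in> Qc" by simp
    obtain w where w: "w \<in> A" "Y = Zs #>\<^bsub>addG A pl\<^esub> w" using Qc_E[OF YQ] by (rule bexE)
    have "Zs #>\<^bsub>addG A pl\<^esub> (u \<boxplus> w) = Zs" using Y w qadd_eq[OF u w(1)] by simp
    then have uw: "u \<boxplus> w \<in> Zs" using coset_self_Z[of "u \<boxplus> w"] u w by simp
    have "(u \<boxplus> w) \<boxplus> ng u = w"
      using u w G.m_comm[of u w] G.m_assoc[of w u "ng u"] G.r_inv[of u] G.r_one[of w] by simp
    moreover have "(u \<boxplus> w) \<boxplus> ng u \<in> Zs #>\<^bsub>addG A pl\<^esub> (ng u)"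
      using G.rcosI[of "u \<boxplus> w" Zs "ng u"] uw Z_sub nu by simp
    ultimately have "w \<in> Zs #>\<^bsub>addG A pl\<^esub> (ng u)" by simp
    then have "Zs #>\<^bsub>addG A pl\<^esub> w = Zs #>\<^bsub>addG A pl\<^esub> (ng u)" by (rule coset_repr[OF nu])
    then show "Y = Zs #>\<^bsub>addG A pl\<^esub> (ng u)" using w by simp
  qed
  then show ?thesis unfolding m_inv_def qcarr qmult qone .
qed

lemma zeta2_Q: assumes a: "a \<in> zeta2_star A pl ml" shows "a \<in> Qs"
proof -
  have aA: "a \<in> A" and aq: "Zs #>\<^bsub>addG A pl\<^esub> a \<in> zeta_star Qc qa qm"
    using a unfolding zeta2_star_def Let_def by auto
  have qst: "bstar Qc qa qm (Zs #>\<^bsub>addG A pl\<^esub> u) (Zs #>\<^bsub>addG A pl\<^esub> v) = Zs #>\<^bsub>addG A pl\<^esub> (u \<star> v)"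
    if u: "u \<in> A" and v: "v \<in> A" for u v
  proof -
    have "bstar Qc qa qm (Zs #>\<^bsub>addG A pl\<^esub> u) (Zs #>\<^bsub>addG A pl\<^esub> v)
        = qa (qa (Zs #>\<^bsub>addG A pl\<^esub> (u \<boxtimes> v)) (Zs #>\<^bsub>addG A pl\<^esub> (ng u))) (Zs #>\<^bsub>addG A pl\<^esub> (ng v))"
      unfolding bstar_def bneg_def qneg[OF u] qneg[OF v] qmul_eq[OF u v] ..
    also have "\<dots> = Zs #>\<^bsub>addG A pl\<^esub> (u \<boxtimes> v \<boxplus> ng u \<boxplus> ng v)"
      using qadd_eq u v by simp
    finally show ?thesis unfolding star_def' .
  qed
  have bz: "bzero Qc qa = Zs" unfolding bzero_def qone ..
  have "a \<star> x \<in> Zs \<and> x \<star> a \<in> Zs" if x: "x \<in> A" for x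
  proof -
    have "Zs #>\<^bsub>addG A pl\<^esub> x \<in> Qc" using Qc_I x by simp
    then have "bstar Qc qa qm (Zs #>\<^bsub>addG A pl\<^esub> a) (Zs #>\<^bsub>addG A pl\<^esub> x) = Zs"
      "bstar Qc qa qm (Zs #>\<^bsub>addG A pl\<^esub> x) (Zs #>\<^bsub>addG A pl\<^esub> a) = Zs"
      using aq bz unfolding zeta_star_def by auto
    then have "Zs #>\<^bsub>addG A pl\<^esub> (a \<star> x) = Zs" "Zs #>\<^bsub>addG A pl\<^esub> (x \<star> a) = Zs"
      using qst aA x by auto
    then show ?thesis using coset_self_Z aA x by simp
  qed
  then show ?thesis unfolding Qs_def using aA by simp
qed


lemma main:
  fixes p :: nat
  assumes T: "\<forall>I J. bideal A pl ml J \<and> bideal J pl ml I \<longrightarrow> bideal A pl ml I"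
    and aQ: "a \<in> Qs"
    and inf: "\<forall>n::nat. n > 0 \<longrightarrow> a [^]\<^bsub>addG A pl\<^esub> n \<noteq> \<zero>\<^sub>A"
    and p: "Factorial_Ring.prime p"
    and tor: "\<forall>x \<in> Zs. (\<exists>n::nat. n > 0 \<and> x [^]\<^bsub>addG A pl\<^esub> n = \<zero>\<^sub>A)
           \<longrightarrow> (\<exists>k::nat. x [^]\<^bsub>addG A pl\<^esub> (p ^ k) = \<zero>\<^sub>A)"
  shows "(a \<star> a) [^]\<^bsub>addG A pl\<^esub> p = \<zero>\<^sub>A"
proof -
  let ?G = "addG A pl"
  have aA: "a \<in> A" using aQ Q_sub by blast
  have powA[simp]: "\<And>x (k::int). x \<in> A \<Longrightarrow> x [^]\<^bsub>?G\<^esub> k \<in> A" using G.int_pow_closed by simp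
  define b where "b = a \<star> a"
  have bZ: "b \<in> Zs" using aQ aA unfolding b_def Qs_def by blast
  have bA: "b \<in> A" using b_def aA by simp
  define c where "c = a [^]\<^bsub>?G\<^esub> (int p)"
  have cQ: "c \<in> Qs" unfolding c_def using G.subgroup_int_pow_closed[OF Q_subgroup aQ] .
  have cA: "c \<in> A" using cQ Q_sub by blast
  define d where "d = c \<star> c"
  have ac: "a \<star> c = b [^]\<^bsub>?G\<^esub> (int p)" unfolding c_def b_def using star_right_pow aA by simp
  have "d = (a \<star> c) [^]\<^bsub>?G\<^esub> (int p)" unfolding d_def using star_left_pow[OF aQ cA] c_def by simp
  then have d_eq: "d = b [^]\<^bsub>?G\<^esub> (int p * int p)" unfolding ac using G.int_pow_pow bA by simp
  have ZPow: "\<And>z (k::int). z \<in> Zs \<Longrightarrow> z [^]\<^bsub>?G\<^esub> k \<in> Zs"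
    using G.subgroup_int_pow_closed[OF Z_subgroup] by blast
  have dZ: "d \<in> Zs" unfolding d_eq using ZPow[OF bZ] .
  have dQ: "d \<in> Qs" using dZ Z_Q by blast
  have dA: "d \<in> A" using dZ Z_sub by blast
  have cpowQ: "\<And>k::int. c [^]\<^bsub>?G\<^esub> k \<in> Qs" using G.subgroup_int_pow_closed[OF Q_subgroup cQ] by blast
  have cpowA: "\<And>k::int. c [^]\<^bsub>?G\<^esub> k \<in> A" using cA by simp
  define J where "J = {z \<boxplus> c [^]\<^bsub>?G\<^esub> k | z k. z \<in> Zs \<and> (k::int) \<in> UNIV}"
  define I where "I = {c [^]\<^bsub>?G\<^esub> k \<boxplus> d [^]\<^bsub>?G\<^esub> l | k l. (k::int) \<in> UNIV \<and> (l::int) \<in> UNIV}"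
  have JG: "subgroup J ?G"
  proof (rule G.subgroupI)
    show "J \<subseteq> carrier ?G" unfolding J_def using Z_sub cA by auto
    have "\<zero>\<^sub>A \<boxplus> c [^]\<^bsub>?G\<^esub> (0::int) \<in> J" unfolding J_def using subgroup.one_closed[OF Z_subgroup] by blast
    then show "J \<noteq> {}" by blast
  next
    fix x assume "x \<in> J"
    then obtain z k where zk: "z \<in> Zs" "x = z \<boxplus> c [^]\<^bsub>?G\<^esub> (k::int)" unfolding J_def by blast
    have zA: "z \<in> A" using zk Z_sub by blast
    have "inv\<^bsub>?G\<^esub> x = ng z \<boxplus> c [^]\<^bsub>?G\<^esub> (- k)"
      using zk zA cA G.inv_mult[of z "c [^]\<^bsub>?G\<^esub> k"] G.int_pow_neg[of c k] by simp
    moreover have "ng z \<in> Zs" using subgroup.m_inv_closed[OF Z_subgroup zk(1)] .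
    ultimately show "inv\<^bsub>?G\<^esub> x \<in> J" unfolding J_def by blast
  next
    fix x y assume "x \<in> J" "y \<in> J"
    then obtain z1 k1 z2 k2 where zk: "z1 \<in> Zs" "x = z1 \<boxplus> c [^]\<^bsub>?G\<^esub> (k1::int)"
      "z2 \<in> Zs" "y = z2 \<boxplus> c [^]\<^bsub>?G\<^esub> (k2::int)" unfolding J_def by blast
    have zA: "z1 \<in> A" "z2 \<in> A" using zk Z_sub by auto
    have e: "c [^]\<^bsub>?G\<^esub> (k1 + k2) = c [^]\<^bsub>?G\<^esub> k1 \<boxplus> c [^]\<^bsub>?G\<^esub> k2"
      using G.int_pow_mult[of c k1 k2] cA by simp
    have "x \<boxplus> y = (z1 \<boxplus> z2) \<boxplus> c [^]\<^bsub>?G\<^esub> (k1 + k2)"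
      unfolding zk(2,4) e using zA cpowA[of k1] cpowA[of k2]
      by (smt (verit) G.m_assoc G.m_closed G.m_comm carrG)
    moreover have "z1 \<boxplus> z2 \<in> Zs" using subgroup.m_closed[OF Z_subgroup] zk by simp
    ultimately show "x \<otimes>\<^bsub>?G\<^esub> y \<in> J" unfolding J_def by blast
  qed
  have ZJ: "Zs \<subseteq> J"
  proof
    fix z assume z: "z \<in> Zs"
    then have "z = z \<boxplus> c [^]\<^bsub>?G\<^esub> (0::int)" using Z_sub by auto
    then show "z \<in> J" unfolding J_def using z by blast
  qed
  have JQ: "J \<subseteq> Qs"
  proof
    fix x assume "x \<in> J"
    then obtain z k where zk: "z \<in> Zs" "x = z \<boxplus> c [^]\<^bsub>?G\<^esub> (k::int)" unfolding J_def by blast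
    then show "x \<in> Qs" using subgroup.m_closed[OF Q_subgroup] Z_Q cpowQ by auto
  qed
  have Jid: "bideal A pl ml J" using ideal_of_A[OF JG ZJ JQ] .
  then have JM: "subgroup J (mulG A ml)" unfolding bideal_def subbrace_def by simp
  have IG: "subgroup I ?G"
  proof (rule G.subgroupI)
    show "I \<subseteq> carrier ?G" unfolding I_def using dA cA by auto
    have "c [^]\<^bsub>?G\<^esub> (0::int) \<boxplus> d [^]\<^bsub>?G\<^esub> (0::int) \<in> I" unfolding I_def by blast
    then show "I \<noteq> {}" by blast
  next
    fix x assume "x \<in> I"
    then obtain k l where kl: "x = c [^]\<^bsub>?G\<^esub> (k::int) \<boxplus> d [^]\<^bsub>?G\<^esub> (l::int)" unfolding I_def by blast
    have "inv\<^bsub>?G\<^esub> x = c [^]\<^bsub>?G\<^esub> (- k) \<boxplus> d [^]\<^bsub>?G\<^esub> (- l)"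
      using kl dA cA G.inv_mult[of "c [^]\<^bsub>?G\<^esub> k" "d [^]\<^bsub>?G\<^esub> l"] G.int_pow_neg[of c k] G.int_pow_neg[of d l] by simp
    then show "inv\<^bsub>?G\<^esub> x \<in> I" unfolding I_def by blast
  next
    fix x y assume "x \<in> I" "y \<in> I"
    then obtain k1 l1 k2 l2 where kl: "x = c [^]\<^bsub>?G\<^esub> (k1::int) \<boxplus> d [^]\<^bsub>?G\<^esub> (l1::int)"
      "y = c [^]\<^bsub>?G\<^esub> (k2::int) \<boxplus> d [^]\<^bsub>?G\<^esub> (l2::int)" unfolding I_def by blast
    have e1: "c [^]\<^bsub>?G\<^esub> (k1 + k2) = c [^]\<^bsub>?G\<^esub> k1 \<boxplus> c [^]\<^bsub>?G\<^esub> k2"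
      using G.int_pow_mult[of c k1 k2] cA by simp
    have e2: "d [^]\<^bsub>?G\<^esub> (l1 + l2) = d [^]\<^bsub>?G\<^esub> l1 \<boxplus> d [^]\<^bsub>?G\<^esub> l2"
      using G.int_pow_mult[of d l1 l2] dA by simp
    have "x \<boxplus> y = c [^]\<^bsub>?G\<^esub> (k1 + k2) \<boxplus> d [^]\<^bsub>?G\<^esub> (l1 + l2)"
      unfolding kl e1 e2
      using cpowA[of k1] cpowA[of k2] powA[OF dA, of l1] powA[OF dA, of l2]
      by (smt (verit) G.m_assoc G.m_closed G.m_comm carrG)
    then show "x \<otimes>\<^bsub>?G\<^esub> y \<in> I" unfolding I_def by blast
  qed
  have IJ: "I \<subseteq> J"
  proof
    fix x assume "x \<in> I"
    then obtain k l where kl: "x = c [^]\<^bsub>?G\<^esub> (k::int) \<boxplus> d [^]\<^bsub>?G\<^esub> (l::int)" unfolding I_def by blast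
    have "x = d [^]\<^bsub>?G\<^esub> l \<boxplus> c [^]\<^bsub>?G\<^esub> k" using kl G.m_comm dA cA by simp
    moreover have "d [^]\<^bsub>?G\<^esub> l \<in> Zs" using ZPow[OF dZ] .
    ultimately show "x \<in> J" unfolding J_def by blast
  qed
  have st: "x \<star> i \<in> I \<and> i \<star> x \<in> I" if x: "x \<in> J" and i: "i \<in> I" for x i
  proof -
    obtain z k where zk: "z \<in> Zs" "x = z \<boxplus> c [^]\<^bsub>?G\<^esub> (k::int)" using x unfolding J_def by blast
    obtain m l where ml: "i = c [^]\<^bsub>?G\<^esub> (m::int) \<boxplus> d [^]\<^bsub>?G\<^esub> (l::int)" using i unfolding I_def by blast
    have zA: "z \<in> A" using zk Z_sub by blast
    have xA: "x \<in> A" using zk zA cA by simp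
    have xQ: "x \<in> Qs" using x JQ by blast
    have iQ: "i \<in> Qs" using i IJ JQ by blast
    have xc: "x \<star> c = d [^]\<^bsub>?G\<^esub> k"
    proof -
      have "x \<star> c = z \<star> c \<boxplus> (c [^]\<^bsub>?G\<^esub> k) \<star> c" unfolding zk(2) using key2 zk Z_Q cpowQ cA by blast
      also have "\<dots> = d [^]\<^bsub>?G\<^esub> k" unfolding d_def using Z_l[OF zk(1) cA] star_left_pow[OF cQ cA] G.l_one[of "(c \<star> c) [^]\<^bsub>?G\<^esub> k"] cA by simp
      finally show ?thesis .
    qed
    have cx: "c \<star> x = d [^]\<^bsub>?G\<^esub> k"
    proof -
      have "c \<star> x = c \<star> z \<boxplus> c \<star> (c [^]\<^bsub>?G\<^esub> k)" unfolding zk(2) using star_left_add cA zA by simp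
      also have "\<dots> = d [^]\<^bsub>?G\<^esub> k" unfolding d_def using Z_r[OF zk(1) cA] star_right_pow[OF cA cA] G.l_one[of "(c \<star> c) [^]\<^bsub>?G\<^esub> k"] cA by simp
      finally show ?thesis .
    qed
    have dl: "d [^]\<^bsub>?G\<^esub> l \<in> Zs" using ZPow[OF dZ] .
    have "x \<star> i = x \<star> (c [^]\<^bsub>?G\<^esub> m) \<boxplus> x \<star> (d [^]\<^bsub>?G\<^esub> l)" unfolding ml using star_left_add xA cA dA by simp
    also have "\<dots> = (d [^]\<^bsub>?G\<^esub> k) [^]\<^bsub>?G\<^esub> m" using star_right_pow[OF xA cA] xc Z_r[OF dl xA] dA by simp
    also have "\<dots> = c [^]\<^bsub>?G\<^esub> (0::int) \<boxplus> d [^]\<^bsub>?G\<^esub> (k * m)" using G.int_pow_pow dA by simp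
    finally have 1: "x \<star> i \<in> I" unfolding I_def by blast
    have "i \<star> x = (c [^]\<^bsub>?G\<^esub> m) \<star> x \<boxplus> (d [^]\<^bsub>?G\<^esub> l) \<star> x" unfolding ml
      using key2[OF cpowQ _ xA] dl Z_Q by blast
    also have "\<dots> = (d [^]\<^bsub>?G\<^esub> k) [^]\<^bsub>?G\<^esub> m" using star_left_pow[OF cQ xA] cx Z_l[OF dl xA] dA by simp
    also have "\<dots> = c [^]\<^bsub>?G\<^esub> (0::int) \<boxplus> d [^]\<^bsub>?G\<^esub> (k * m)" using G.int_pow_pow dA by simp
    finally have 2: "i \<star> x \<in> I" unfolding I_def by blast
    show ?thesis using 1 2 by simp
  qed
  have IJid: "bideal J pl ml I" using ideal_of_J[OF JG JM IG IJ] st by blast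
  have Iid: "bideal A pl ml I" using T Jid IJid by blast
  have cI: "c \<in> I"
  proof -
    have "c = c [^]\<^bsub>?G\<^esub> (1::int) \<boxplus> d [^]\<^bsub>?G\<^esub> (0::int)" using cA by simp
    then show ?thesis unfolding I_def by blast
  qed
  have "a \<star> c \<in> I" using Iid aA cI unfolding bideal_def by blast
  then obtain k l where kl: "b [^]\<^bsub>?G\<^esub> (int p) = c [^]\<^bsub>?G\<^esub> (k::int) \<boxplus> d [^]\<^bsub>?G\<^esub> (l::int)"
    unfolding ac I_def by blast
  have p1: "p > 1" using p prime_gt_1_nat by blast
  define t where "t = int p - int p * int p * l"
  have ck: "c [^]\<^bsub>?G\<^esub> k = a [^]\<^bsub>?G\<^esub> (int p * k)" unfolding c_def using G.int_pow_pow aA by simp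
  have dl: "d [^]\<^bsub>?G\<^esub> l = b [^]\<^bsub>?G\<^esub> (int p * int p * l)" unfolding d_eq using G.int_pow_pow bA by simp
  have bt: "b [^]\<^bsub>?G\<^esub> t = b [^]\<^bsub>?G\<^esub> (int p) \<boxplus> ng (b [^]\<^bsub>?G\<^esub> (int p * int p * l))"
    unfolding t_def using G.int_pow_diff bA by simp
  have e1: "a [^]\<^bsub>?G\<^esub> (int p * k) = b [^]\<^bsub>?G\<^esub> t"
  proof -
    let ?X = "a [^]\<^bsub>?G\<^esub> (int p * k)" and ?Y = "b [^]\<^bsub>?G\<^esub> (int p * int p * l)"
    have XA: "?X \<in> A" and YA: "?Y \<in> A" using aA bA by auto
    have "b [^]\<^bsub>?G\<^esub> t = (?X \<boxplus> ?Y) \<boxplus> ng ?Y" unfolding bt kl ck dl ..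
    also have "\<dots> = ?X" using XA YA G.m_assoc[of ?X ?Y "ng ?Y"] G.r_inv[of ?Y] G.r_one[of ?X] by simp
    finally show ?thesis by simp
  qed
  have btZ: "b [^]\<^bsub>?G\<^esub> t \<in> Zs" using ZPow[OF bZ] .
  have bpk: "b [^]\<^bsub>?G\<^esub> (int p * k) = \<zero>\<^sub>A"
  proof -
    have "b [^]\<^bsub>?G\<^esub> (int p * k) = a \<star> (a [^]\<^bsub>?G\<^esub> (int p * k))"
      unfolding b_def using star_right_pow[OF aA aA] by simp
    also have "\<dots> = \<zero>\<^sub>A" unfolding e1 using Z_r[OF btZ aA] .
    finally show ?thesis .
  qed
  have k0: "k = 0"
  proof (rule ccontr)
    assume k: "k \<noteq> 0"
    define m where "m = int p * k"
    have m0: "m \<noteq> 0" using k p1 m_def by simp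
    have "a [^]\<^bsub>?G\<^esub> (m * m) = (a [^]\<^bsub>?G\<^esub> m) [^]\<^bsub>?G\<^esub> m" using G.int_pow_pow aA by simp
    also have "\<dots> = (b [^]\<^bsub>?G\<^esub> t) [^]\<^bsub>?G\<^esub> m" using e1 m_def by simp
    also have "\<dots> = b [^]\<^bsub>?G\<^esub> (m * t)" using G.int_pow_pow bA by (simp add: mult.commute)
    also have "\<dots> = (b [^]\<^bsub>?G\<^esub> m) [^]\<^bsub>?G\<^esub> t" using G.int_pow_pow bA by simp
    also have "\<dots> = \<zero>\<^sub>A" using bpk m_def by simp
    finally have am: "a [^]\<^bsub>?G\<^esub> (m * m) = \<zero>\<^sub>A" .
    have mm: "m * m = int (nat (m * m))" "nat (m * m) > 0" using m0 by (auto simp: zero_less_mult_iff)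
    have "a [^]\<^bsub>?G\<^esub> (nat (m * m)) = \<zero>\<^sub>A" using am mm(1) int_pow_int[of ?G a "nat (m * m)"] by simp
    then show False using inf mm(2) by blast
  qed
  have bt0: "b [^]\<^bsub>?G\<^esub> t = \<zero>\<^sub>A" using e1 k0 by simp
  have t_eq: "t = int p * (1 - int p * l)" unfolding t_def by (simp add: algebra_simps)
  have t0: "t \<noteq> 0"
  proof
    assume "t = 0"
    then have "1 - int p * l = 0" using t_eq p1 by simp
    then have "int p * l = 1" by simp
    then have "int p dvd 1" by (metis dvd_triv_left)
    then show False using p1 by simp
  qed
  have ordt: "int (group.ord ?G b) dvd t" using G.int_pow_eq_id[of b t] bA bt0 by simp
  have ord0: "group.ord ?G b \<noteq> 0" using ordt t0 by auto
  have "b [^]\<^bsub>?G\<^esub> (group.ord ?G b) = \<zero>\<^sub>A" using G.pow_ord_eq_1[of b] bA by simp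
  then obtain j where j: "b [^]\<^bsub>?G\<^esub> (p ^ j) = \<zero>\<^sub>A" using tor bZ ord0 by blast
  have "group.ord ?G b dvd p ^ j" using G.pow_eq_id[of b "p ^ j"] bA j by simp
  then obtain i where i: "group.ord ?G b = p ^ i" using divides_primepow_nat[OF p] by blast
  have i1: "i \<le> 1"
  proof (rule ccontr)
    assume "\<not> i \<le> 1"
    then have "p * p dvd p ^ i" by (metis le_add_diff_inverse not_less_eq_eq power2_eq_square power_add dvd_triv_left numeral_2_eq_2 Suc_1)
    then have "int p * int p dvd t" using ordt i by (metis dvd_trans of_nat_dvd_iff of_nat_mult)
    then have "int p dvd 1 - int p * l" unfolding t_eq using p1 by simp
    then have "int p dvd 1" by (metis dvd_diff_commute dvd_triv_left dvd_add_left_iff diff_add_cancel)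
    then show False using p1 by simp
  qed
  have "group.ord ?G b dvd p" using i i1 by (cases i) auto
  then show ?thesis using G.pow_eq_id[of b p] bA b_def by simp
qed

end

theorem lemma4p5:
  fixes A :: "'a set" and pl ml :: "'a \<Rightarrow> 'a \<Rightarrow> 'a" and a :: 'a and p :: nat
  assumes "T_brace A pl ml"
    and "a \<in> zeta2_star A pl ml"
    and "\<forall>n::nat. n > 0 \<longrightarrow> a [^]\<^bsub>addG A pl\<^esub> n \<noteq> bzero A pl"
    and "Factorial_Ring.prime p"
    and "\<forall>x \<in> zeta_star A pl ml. (\<exists>n::nat. n > 0 \<and> x [^]\<^bsub>addG A pl\<^esub> n = bzero A pl)
           \<longrightarrow> (\<exists>k::nat. x [^]\<^bsub>addG A pl\<^esub> (p ^ k) = bzero A pl)"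
  shows "(bstar A pl ml a a) [^]\<^bsub>addG A pl\<^esub> p = bzero A pl"
proof -
  have br: "brace A pl ml" and T: "\<forall>I J. bideal A pl ml J \<and> bideal J pl ml I \<longrightarrow> bideal A pl ml I"
    using assms(1) unfolding T_brace_def by auto
  interpret brc A pl ml by (rule brc.intro[OF br])
  have aQ: "a \<in> Qs" by (rule zeta2_Q[OF assms(2)])
  have "(bstar A pl ml a a) [^]\<^bsub>addG A pl\<^esub> p = \<one>\<^bsub>addG A pl\<^esub>"
    using main[OF T aQ _ assms(4)] assms(3) assms(5) by simp
  then show ?thesis by simp
qed

end
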